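(* For $n\geq 1$, let $G_n$ be the graph with vertex set $\{0,1,\ldots,n\}$ in which, for each $i\in\{0,\ldots,n-1\}$, there are $2i+1$ parallel edges $e_{i,1},\ldots,e_{i,2i+1}$ between $i$ and $i+1$ (and no other edges). Let $0<a<b$ and let the resistances $r_{i,k}=r_{e_{i,k}}$ be independent, each distributed according to $\frac12\delta_a+\frac12\delta_b$. Then, as $n\to\infty$, $$\mathbb{E}\big(\mathcal{R}_r(0\leftrightarrow n)\big)=\Theta(\log n)\quad\text{and}\quad \operatorname{Var}\big(\mathcal{R}_r(0\leftrightarrow n)\big)=\Theta(1),$$ where $\mathcal{R}_r(0\leftrightarrow n)=\sum_{i=0}^{n-1}\Big(\sum_{k=1}^{2i+1}\frac{1}{r_{i,k}}\Big)^{-1}$ is the effective resistance between $0$ and $n$.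
   Context: $f(n)=\Theta(g(n))$ means there are constants $0<c\le C$ such that $c\,g(n)\le f(n)\le C\,g(n)$ for all large $n$. *)

theory Defs
  imports "HOL-Probability.Probability"
begin

text \<open>Edge set of G_n: edge e_{i,k} is encoded as the pair (i,k), 0 <= i < n, 1 <= k <= 2i+1.\<close>
definition edges :: "nat \<Rightarrow> (nat \<times> nat) set" where
  "edges n = {(i, k). i < n \<and> 1 \<le> k \<and> k \<le> 2 * i + 1}"

text \<open>Joint law of the i.i.d. resistances, each uniform on {a, b} (i.e. (delta_a + delta_b)/2 for a < b).
  Coordinates outside the edge set are fixed to 0 and never used.\<close>
definition resist_law :: "real \<Rightarrow> real \<Rightarrow> nat \<Rightarrow> (nat \<times> nat \<Rightarrow> real) pmf" where
  "resist_law a b n = Pi_pmf (edges n) 0 (\<lambda>_. pmf_of_set {a, b})"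

definition eff_res :: "nat \<Rightarrow> (nat \<times> nat \<Rightarrow> real) \<Rightarrow> real" where
  "eff_res n r = (\<Sum>i<n. inverse (\<Sum>k = 1..2 * i + 1. inverse (r (i, k))))"

definition bigTheta_seq :: "(nat \<Rightarrow> real) \<Rightarrow> (nat \<Rightarrow> real) \<Rightarrow> bool" where
  "bigTheta_seq f g \<longleftrightarrow> (\<exists>c C. 0 < c \<and> c \<le> C \<and>
     (\<forall>\<^sub>F n in at_top. c * g n \<le> f n \<and> f n \<le> C * g n))"

end

theory Submission
  imports Defs
begin

lemma exp_pair_prod:
  fixes F :: "'a \<Rightarrow> real" and G :: "'b \<Rightarrow> real"
  assumes "finite (set_pmf p)" "finite (set_pmf q)"
  shows "measure_pmf.expectation (pair_pmf p q) (\<lambda>z. F (fst z) * G (snd z))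
       = measure_pmf.expectation p F * measure_pmf.expectation q G"
proof -
  have "measure_pmf.expectation (pair_pmf p q) (\<lambda>z. F (fst z) * G (snd z))
      = (\<Sum>z\<in>set_pmf p \<times> set_pmf q. F (fst z) * G (snd z) * pmf (pair_pmf p q) z)"
    using assms by (intro integral_measure_pmf_real) auto
  also have "\<dots> = (\<Sum>x\<in>set_pmf p. \<Sum>y\<in>set_pmf q. (F x * pmf p x) * (G y * pmf q y))"
    unfolding sum.cartesian_product by (intro sum.cong refl) (auto simp: pmf_pair)
  also have "\<dots> = (\<Sum>x\<in>set_pmf p. F x * pmf p x) * (\<Sum>y\<in>set_pmf q. G y * pmf q y)"
    by (simp add: sum_product)
  also have "\<dots> = measure_pmf.expectation p F * measure_pmf.expectation q G"
    using assms by (simp add: integral_measure_pmf_real)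
  finally show ?thesis .
qed

lemma var_pair:
  fixes F :: "'a \<Rightarrow> real" and G :: "'b \<Rightarrow> real"
  assumes fp: "finite (set_pmf p)" and fq: "finite (set_pmf q)"
  shows "measure_pmf.expectation (pair_pmf p q) (\<lambda>z. F (fst z) + G (snd z))
           = measure_pmf.expectation p F + measure_pmf.expectation q G"
    and "measure_pmf.variance (pair_pmf p q) (\<lambda>z. F (fst z) + G (snd z))
           = measure_pmf.variance p F + measure_pmf.variance q G"
proof -
  have fin: "finite (set_pmf (pair_pmf p q))" using assms by simp
  note ip = integrable_measure_pmf_finite[OF fp]
  note iq = integrable_measure_pmf_finite[OF fq]
  note ipq = integrable_measure_pmf_finite[OF fin]
  define mF where "mF = measure_pmf.expectation p F"
  define mG where "mG = measure_pmf.expectation q G"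
  show E: "measure_pmf.expectation (pair_pmf p q) (\<lambda>z. F (fst z) + G (snd z)) = mF + mG"
    unfolding mF_def mG_def by (subst Bochner_Integration.integral_add) (auto intro: ipq)
  have z1: "measure_pmf.expectation p (\<lambda>x. F x - mF) = 0"
    unfolding mF_def by (subst Bochner_Integration.integral_diff) (auto intro: ip)
  have z2: "measure_pmf.expectation q (\<lambda>x. G x - mG) = 0"
    unfolding mG_def by (subst Bochner_Integration.integral_diff) (auto intro: iq)
  have cross: "measure_pmf.expectation (pair_pmf p q) (\<lambda>z. (F (fst z) - mF) * (G (snd z) - mG)) = 0"
    using exp_pair_prod[OF fp fq, of "\<lambda>x. F x - mF" "\<lambda>x. G x - mG"] z1 z2 by simp
  have "measure_pmf.variance (pair_pmf p q) (\<lambda>z. F (fst z) + G (snd z))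
      = measure_pmf.expectation (pair_pmf p q) (\<lambda>z. ((F (fst z) - mF)\<^sup>2 + (G (snd z) - mG)\<^sup>2)
           + 2 * ((F (fst z) - mF) * (G (snd z) - mG)))"
    unfolding E by (intro Bochner_Integration.integral_cong refl) (simp add: power2_eq_square algebra_simps)
  also have "\<dots> = measure_pmf.expectation (pair_pmf p q) (\<lambda>z. (F (fst z) - mF)\<^sup>2)
      + measure_pmf.expectation (pair_pmf p q) (\<lambda>z. (G (snd z) - mG)\<^sup>2)
      + 2 * measure_pmf.expectation (pair_pmf p q) (\<lambda>z. (F (fst z) - mF) * (G (snd z) - mG))"
    by (simp add: Bochner_Integration.integral_add ipq)
  also have "\<dots> = measure_pmf.variance p F + measure_pmf.variance q G"
    using cross expectation_pair_pmf_fst[of p q "\<lambda>x. (F x - mF)\<^sup>2"]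
      expectation_pair_pmf_snd[of p q "\<lambda>x. (G x - mG)\<^sup>2"] unfolding mF_def mG_def by simp
  finally show "measure_pmf.variance (pair_pmf p q) (\<lambda>z. F (fst z) + G (snd z))
           = measure_pmf.variance p F + measure_pmf.variance q G" .
qed

lemma bounds_exp_var:
  fixes f :: "'a \<Rightarrow> real"
  assumes fin: "finite (set_pmf p)" and bd: "\<And>x. x \<in> set_pmf p \<Longrightarrow> l \<le> f x \<and> f x \<le> u"
  shows "l \<le> measure_pmf.expectation p f" and "measure_pmf.expectation p f \<le> u"
    and "measure_pmf.variance p f \<le> (u - l)\<^sup>2"
proof -
  note int = integrable_measure_pmf_finite[OF fin]
  show l: "l \<le> measure_pmf.expectation p f"
    by (rule measure_pmf.integral_ge_const[OF int]) (auto intro!: AE_pmfI dest: bd)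
  show u: "measure_pmf.expectation p f \<le> u"
    by (rule measure_pmf.integral_le_const[OF int]) (auto intro!: AE_pmfI dest: bd)
  show "measure_pmf.variance p f \<le> (u - l)\<^sup>2"
  proof (rule measure_pmf.integral_le_const[OF int], rule AE_pmfI)
    fix x assume x: "x \<in> set_pmf p"
    have "\<bar>f x - measure_pmf.expectation p f\<bar> \<le> \<bar>u - l\<bar>" using bd[OF x] l u by auto
    thus "(f x - measure_pmf.expectation p f)\<^sup>2 \<le> (u - l)\<^sup>2" by (simp add: abs_le_square_iff)
  qed
qed

definition blk :: "nat \<Rightarrow> (nat \<times> nat) set" where
  "blk n = {(i, k). i = n \<and> 1 \<le> k \<and> k \<le> 2 * n + 1}"

definition Q :: "real \<Rightarrow> real \<Rightarrow> nat \<Rightarrow> (nat \<times> nat \<Rightarrow> real) pmf" where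
  "Q a b n = Pi_pmf (blk n) 0 (\<lambda>_. pmf_of_set {a, b})"

definition X :: "nat \<Rightarrow> (nat \<times> nat \<Rightarrow> real) \<Rightarrow> real" where
  "X n r = inverse (\<Sum>k = 1..2 * n + 1. inverse (r (n, k)))"

lemma finite_edges: "finite (edges n)"
  by (rule finite_subset[of _ "{..<n} \<times> {..2*n+1}"]) (auto simp: edges_def)

lemma finite_blk: "finite (blk n)"
  by (rule finite_subset[of _ "{n} \<times> {..2*n+1}"]) (auto simp: blk_def)

lemma edges_Suc: "edges (Suc n) = edges n \<union> blk n" and edges_blk: "edges n \<inter> blk n = {}"
  by (auto simp: edges_def blk_def)

lemma finite_set_Pi:
  assumes "finite A"
  shows "finite (set_pmf (Pi_pmf A (0::real) (\<lambda>_. pmf_of_set {a, b})))"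
  using assms by (auto simp: set_Pi_pmf)

lemma set_Pi_ab:
  assumes "finite A" "r \<in> set_pmf (Pi_pmf A (0::real) (\<lambda>_. pmf_of_set {a, b}))" "x \<in> A"
  shows "r x \<in> {a, b}"
  using assms by (auto simp: set_Pi_pmf PiE_dflt_def)

lemma law_Suc: "resist_law a b (Suc n) =
   map_pmf (\<lambda>(f,g) x. if x \<in> edges n then f x else g x) (pair_pmf (resist_law a b n) (Q a b n))"
  unfolding resist_law_def Q_def edges_Suc
  by (rule Pi_pmf_union) (auto simp: finite_edges finite_blk edges_blk)

lemma eff_res_merge: "eff_res (Suc n) (\<lambda>x. if x \<in> edges n then f x else g x) = eff_res n f + X n g"
proof -
  have "eff_res n (\<lambda>x. if x \<in> edges n then f x else g x) = eff_res n f"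
    unfolding eff_res_def by (intro sum.cong refl arg_cong[where f=inverse]) (auto simp: edges_def)
  moreover have "X n (\<lambda>x. if x \<in> edges n then f x else g x) = X n g"
    unfolding X_def by (intro sum.cong refl arg_cong[where f=inverse]) (auto simp: edges_def)
  ultimately show ?thesis by (simp add: eff_res_def X_def)
qed

lemma EV_Suc:
  "measure_pmf.expectation (resist_law a b (Suc n)) (eff_res (Suc n)) =
     measure_pmf.expectation (resist_law a b n) (eff_res n) + measure_pmf.expectation (Q a b n) (X n)"
  "measure_pmf.variance (resist_law a b (Suc n)) (eff_res (Suc n)) =
     measure_pmf.variance (resist_law a b n) (eff_res n) + measure_pmf.variance (Q a b n) (X n)"
proof -
  have eq: "(\<lambda>z. eff_res (Suc n) ((\<lambda>(f,g) x. if x \<in> edges n then f x else g x) z))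
      = (\<lambda>z. eff_res n (fst z) + X n (snd z))"
    by (auto simp: eff_res_merge case_prod_beta)
  have eq_pt: "eff_res (Suc n) (case z of (f,g) \<Rightarrow> (\<lambda>x. if x \<in> edges n then f x else g x))
      = eff_res n (fst z) + X n (snd z)" for z
    by (auto simp: eff_res_merge case_prod_beta)
  have f1: "finite (set_pmf (resist_law a b n))" unfolding resist_law_def
    by (rule finite_set_Pi[OF finite_edges])
  have f2: "finite (set_pmf (Q a b n))" unfolding Q_def
    by (rule finite_set_Pi[OF finite_blk])
  show "measure_pmf.expectation (resist_law a b (Suc n)) (eff_res (Suc n)) =
     measure_pmf.expectation (resist_law a b n) (eff_res n) + measure_pmf.expectation (Q a b n) (X n)"
    unfolding law_Suc integral_map_pmf eq by (rule var_pair(1)[OF f1 f2])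
  show "measure_pmf.variance (resist_law a b (Suc n)) (eff_res (Suc n)) =
     measure_pmf.variance (resist_law a b n) (eff_res n) + measure_pmf.variance (Q a b n) (X n)"
    unfolding law_Suc integral_map_pmf eq_pt by (rule var_pair(2)[OF f1 f2])
qed

lemma EV_sum:
  "measure_pmf.expectation (resist_law a b n) (eff_res n) = (\<Sum>i<n. measure_pmf.expectation (Q a b i) (X i))
   \<and> measure_pmf.variance (resist_law a b n) (eff_res n) = (\<Sum>i<n. measure_pmf.variance (Q a b i) (X i))"
proof (induction n)
  case 0
  have "resist_law a b 0 = return_pmf (\<lambda>_. 0)" by (simp add: resist_law_def edges_def)
  then show ?case by (simp add: eff_res_def)
next
  case (Suc n)
  note 1 = EV_Suc(1)[of a b n]
  note 2 = EV_Suc(2)[of a b n]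
  show ?case unfolding sum.lessThan_Suc using 1 2 Suc.IH by (intro conjI; linarith)
qed

lemma X_bounds:
  assumes "0 < a" "a < b" "r \<in> set_pmf (Q a b n)"
  shows "a / (2 * real n + 1) \<le> X n r \<and> X n r \<le> b / (2 * real n + 1)"
proof -
  have rk: "r (n, k) \<in> {a, b}" if "k \<in> {1..2*n+1}" for k
    using set_Pi_ab[OF finite_blk assms(3)[unfolded Q_def]] that by (auto simp: blk_def)
  let ?S = "\<Sum>k = 1..2 * n + 1. inverse (r (n, k))"
  have ik: "inverse b \<le> inverse (r (n, k)) \<and> inverse (r (n, k)) \<le> inverse a" if "k \<in> {1..2*n+1}" for k
    using rk[OF that] assms(1,2) by (auto simp: le_imp_inverse_le)
  have "(\<Sum>k = 1..2 * n + 1. inverse b) \<le> ?S"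
    using ik by (intro sum_mono) auto
  moreover have "(\<Sum>k = 1..2 * n + 1. inverse b) = (2 * real n + 1) / b"
    by (simp add: divide_inverse)
  ultimately have lo: "(2 * real n + 1) / b \<le> ?S" by linarith
  have "?S \<le> (\<Sum>k = 1..2 * n + 1. inverse a)"
    using ik by (intro sum_mono) auto
  moreover have "(\<Sum>k = 1..2 * n + 1. inverse a) = (2 * real n + 1) / a"
    by (simp add: divide_inverse)
  ultimately have hi: "?S \<le> (2 * real n + 1) / a" by linarith
  have pos: "0 < (2 * real n + 1) / b" using assms by simp
  have Spos: "0 < ?S" using lo pos by linarith
  have "inverse ?S \<le> inverse ((2 * real n + 1) / b)" using lo pos by (intro le_imp_inverse_le) auto
  moreover have "inverse ((2 * real n + 1) / a) \<le> inverse ?S" using hi Spos by (intro le_imp_inverse_le) auto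
  ultimately show ?thesis unfolding X_def by (simp add: field_simps)
qed

lemma VX0:
  assumes "a \<noteq> (b::real)"
  shows "measure_pmf.variance (Q a b 0) (X 0) = (b - a)\<^sup>2 / 4"
proof -
  have X0: "X 0 = (\<lambda>r. r (0, 1))" by (simp add: X_def fun_eq_iff)
  have M: "map_pmf (\<lambda>r. r (0, 1)) (Q a b 0) = pmf_of_set {a, b}"
    unfolding Q_def by (subst Pi_pmf_component) (auto simp: finite_blk blk_def)
  have "measure_pmf.variance (Q a b 0) (\<lambda>r. r (0, 1))
      = measure_pmf.variance (map_pmf (\<lambda>r. r (0, 1)) (Q a b 0)) (\<lambda>x. x)" by simp
  also have "\<dots> = (b - a)\<^sup>2 / 4" unfolding M using assms
    by (simp add: integral_pmf_of_set field_simps power2_eq_square)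
  finally show ?thesis unfolding X0 .
qed

definition h :: "nat \<Rightarrow> real" where "h n = (\<Sum>i<n. 1 / (2 * real i + 1))"

lemma h_lower: "ln (real n + 1) / 2 \<le> h n"
proof (induction n)
  case 0 then show ?case by (simp add: h_def)
next
  case (Suc n)
  have "ln ((real n + 2) / (real n + 1)) \<le> (real n + 2) / (real n + 1) - 1"
    by (rule ln_le_minus_one) simp
  also have "\<dots> = 1 / (real n + 1)" by (simp add: field_simps)
  finally have "ln (real n + 2) - ln (real n + 1) \<le> 1 / (real n + 1)"
    by (simp add: ln_div)
  moreover have "1 / (real n + 1) \<le> 2 / (2 * real n + 1)" by (simp add: field_simps)
  ultimately show ?case using Suc.IH by (simp add: h_def add.commute)
qed

lemma h_upper: "1 \<le> n \<Longrightarrow> h n \<le> 1 + ln (real n)"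
proof (induction n rule: dec_induct)
  case base then show ?case by (simp add: h_def)
next
  case (step m)
  have "ln (real m / (real m + 1)) \<le> real m / (real m + 1) - 1"
    by (rule ln_le_minus_one) (use step.hyps in simp)
  also have "\<dots> = - (1 / (real m + 1))" by (simp add: field_simps)
  finally have "1 / (real m + 1) \<le> ln (real m + 1) - ln (real m)"
    using step.hyps by (simp add: ln_div)
  moreover have "1 / (2 * real m + 1) \<le> 1 / (real m + 1)" by (simp add: field_simps)
  ultimately show ?case using step.IH by (simp add: h_def add.commute)
qed

lemma sq_step:
  assumes "(x::real) \<ge> 1" shows "1 / x\<^sup>2 \<le> 2 / x - 2 / (x + 2)"
proof -
  have x0: "0 < x" "0 < x + 2" using assms by auto
  have e: "2 / x - 2 / (x + 2) = 4 / (x * (x + 2))" using x0 by (simp add: field_simps)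
  have "1 / (x * x) \<le> 4 / (x * (x + 2))"
    using x0 assms by (simp add: divide_simps)
  thus ?thesis unfolding e by (simp add: power2_eq_square)
qed

lemma sq_sum: "(\<Sum>i<n. 1 / (2 * real i + 1)\<^sup>2) \<le> 2 - 2 / (2 * real n + 1)"
proof (induction n)
  case 0 then show ?case by simp
next
  case (Suc n)
  have eq: "2 * real (Suc n) + 1 = (2 * real n + 1) + 2" by simp
  have "1 / (2 * real n + 1)\<^sup>2 \<le> 2 / (2 * real n + 1) - 2 / (2 * real (Suc n) + 1)"
    unfolding eq by (rule sq_step) simp
  then show ?case using Suc.IH by simp
qed

theorem proposition2:
  fixes a b :: real
  assumes "0 < a" and "a < b"
  shows "bigTheta_seq (\<lambda>n. measure_pmf.expectation (resist_law a b n) (eff_res n)) (\<lambda>n. ln (real n))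
       \<and> bigTheta_seq (\<lambda>n. measure_pmf.variance (resist_law a b n) (eff_res n)) (\<lambda>n. 1)"
proof
  have fQ: "finite (set_pmf (Q a b i))" for i unfolding Q_def by (rule finite_set_Pi[OF finite_blk])
  have EX: "a / (2 * real i + 1) \<le> measure_pmf.expectation (Q a b i) (X i) \<and>
            measure_pmf.expectation (Q a b i) (X i) \<le> b / (2 * real i + 1)" for i
    using bounds_exp_var(1,2)[OF fQ[of i], where l="a / (2 * real i + 1)" and u="b / (2 * real i + 1)" and f="X i"] X_bounds[OF assms] by auto
  have VX: "measure_pmf.variance (Q a b i) (X i) \<le> (b - a)\<^sup>2 * (1 / (2 * real i + 1)\<^sup>2)" for i
  proof -
    have "measure_pmf.variance (Q a b i) (X i) \<le> (b / (2 * real i + 1) - a / (2 * real i + 1))\<^sup>2"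
      using bounds_exp_var(3)[OF fQ[of i], where l="a / (2 * real i + 1)" and u="b / (2 * real i + 1)" and f="X i"]
        X_bounds[OF assms] by auto
    also have "\<dots> = (b - a)\<^sup>2 * (1 / (2 * real i + 1)\<^sup>2)"
      by (simp add: power_divide diff_divide_distrib[symmetric])
    finally show ?thesis .
  qed
  have VXnn: "0 \<le> measure_pmf.variance (Q a b i) (X i)" for i
    by (rule measure_pmf.variance_positive)
  show "bigTheta_seq (\<lambda>n. measure_pmf.expectation (resist_law a b n) (eff_res n)) (\<lambda>n. ln (real n))"
    unfolding bigTheta_seq_def
  proof (intro exI conjI)
    show "0 < a / 2" using assms by simp
    show "a / 2 \<le> 2 * b" using assms by simp
    show "\<forall>\<^sub>F n in at_top. a / 2 * ln (real n) \<le> measure_pmf.expectation (resist_law a b n) (eff_res n) \<and>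
          measure_pmf.expectation (resist_law a b n) (eff_res n) \<le> 2 * b * ln (real n)"
      using eventually_ge_at_top[of 3]
    proof eventually_elim
      case (elim n)
      have E: "measure_pmf.expectation (resist_law a b n) (eff_res n) = (\<Sum>i<n. measure_pmf.expectation (Q a b i) (X i))"
        using EV_sum by blast
      have lo: "a * h n \<le> (\<Sum>i<n. measure_pmf.expectation (Q a b i) (X i))"
        unfolding h_def sum_distrib_left using EX by (intro sum_mono) (simp add: field_simps)
      have hi: "(\<Sum>i<n. measure_pmf.expectation (Q a b i) (X i)) \<le> b * h n"
        unfolding h_def sum_distrib_left using EX by (intro sum_mono) (simp add: field_simps)
      have ln1: "1 \<le> ln (real n)"
      proof -
        have "exp 1 \<le> real n" using exp_le elim by linarith
        thus ?thesis using ln_le_cancel_iff[of "exp 1" "real n"] elim by simp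
      qed
      have "ln (real n) \<le> ln (real n + 1)" using elim by simp
      hence h1: "ln (real n) / 2 \<le> h n" using h_lower[of n] by linarith
      have h2: "h n \<le> 2 * ln (real n)" using h_upper[of n] elim ln1 by simp
      have "a / 2 * ln (real n) \<le> a * h n" using h1 assms by (simp add: field_simps)
      moreover have "b * h n \<le> b * (2 * ln (real n))"
        by (rule mult_left_mono[OF h2]) (use assms in simp)
      ultimately show ?case using E lo hi by linarith
    qed
  qed
  show "bigTheta_seq (\<lambda>n. measure_pmf.variance (resist_law a b n) (eff_res n)) (\<lambda>n. 1)"
    unfolding bigTheta_seq_def
  proof (intro exI conjI)
    show "0 < (b - a)\<^sup>2 / 4" using assms by simp
    show "(b - a)\<^sup>2 / 4 \<le> 2 * (b - a)\<^sup>2" by simp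
    show "\<forall>\<^sub>F n in at_top. (b - a)\<^sup>2 / 4 * 1 \<le> measure_pmf.variance (resist_law a b n) (eff_res n) \<and>
          measure_pmf.variance (resist_law a b n) (eff_res n) \<le> 2 * (b - a)\<^sup>2 * 1"
      using eventually_ge_at_top[of 1]
    proof eventually_elim
      case (elim n)
      have V: "measure_pmf.variance (resist_law a b n) (eff_res n) = (\<Sum>i<n. measure_pmf.variance (Q a b i) (X i))"
        using EV_sum by blast
      have "measure_pmf.variance (Q a b 0) (X 0) \<le> (\<Sum>i<n. measure_pmf.variance (Q a b i) (X i))"
        using elim VXnn by (intro member_le_sum) auto
      hence lo: "(b - a)\<^sup>2 / 4 \<le> (\<Sum>i<n. measure_pmf.variance (Q a b i) (X i))"
        using VX0[of a b] assms by simp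
      have "(\<Sum>i<n. measure_pmf.variance (Q a b i) (X i)) \<le> (\<Sum>i<n. (b - a)\<^sup>2 * (1 / (2 * real i + 1)\<^sup>2))"
        using VX by (intro sum_mono) auto
      also have "\<dots> = (b - a)\<^sup>2 * (\<Sum>i<n. 1 / (2 * real i + 1)\<^sup>2)" by (simp add: sum_distrib_left)
      also have "\<dots> \<le> (b - a)\<^sup>2 * 2"
      proof (rule mult_left_mono)
        have "0 \<le> 2 / (2 * real n + 1)" by simp
        then show "(\<Sum>i<n. 1 / (2 * real i + 1)\<^sup>2) \<le> 2" using sq_sum[of n] by linarith
      qed simp
      finally show ?case using lo V by simp
    qed
  qed
qed

end
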